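(* Let $m\in\mathbb{N}$, let $p,h$ be integers with $0\le p\le h$, and let $M$ be a subdiamond of $D_m$ of height $2^h$. If $A\subseteq M$ satisfies $d_{D_m}(u,v)\ge 2^p$ for all distinct $u,v\in A$, then $|A|\le 2\cdot 4^{h-p}$.
   Context: Diamonds: $D_0$ has two vertices joined by an edge; $D_i$ is obtained from $D_{i-1}$ by replacing each edge $uv$ by a quadrilateral $u,a,v,b$. $D_m$ carries the shortest path metric on its vertex set with edges of length $1$. A subdiamond of $D_m$ is the set of vertices of $D_m$ that evolved (in the steps $j+1,\dots,m$ of the construction) from a single edge $e$ of some $D_j$, $0\le j\le m$, including the endpoints of $e$; these endpoints are its bottom and top, and its height is the distance between top and bottom, equal to $2^{m-j}$. *)

theory Defs
  imports Main
begin

text \<open>Bot and Top are the two vertices of D_0;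
  Mid u v s is the new vertex created when the edge (u,v) is replaced by the
  quadrilateral u, Mid u v False, v, Mid u v True.
  Edges are stored oriented from bottom to top.\<close>
datatype dvert = Bot | Top | Mid dvert dvert bool

definition refine :: "(dvert \<times> dvert) set \<Rightarrow> (dvert \<times> dvert) set" where
  "refine E = (\<Union>(u,v)\<in>E. \<Union>s. {(u, Mid u v s), (Mid u v s, v)})"

definition dedges :: "nat \<Rightarrow> (dvert \<times> dvert) set" where
  "dedges j = (refine ^^ j) {(Bot, Top)}"

definition endpoints :: "(dvert \<times> dvert) set \<Rightarrow> dvert set" where
  "endpoints E = fst ` E \<union> snd ` E"

definition dverts :: "nat \<Rightarrow> dvert set" where
  "dverts m = endpoints (dedges m)"

definition dadj :: "nat \<Rightarrow> (dvert \<times> dvert) set" where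
  "dadj m = dedges m \<union> converse (dedges m)"

definition ddist :: "nat \<Rightarrow> dvert \<Rightarrow> dvert \<Rightarrow> nat" where
  "ddist m u v = (LEAST n. (u, v) \<in> dadj m ^^ n)"

text \<open>The subdiamond of D_m evolved from edge e of D_j (j \<le> m): the vertex set
  of the graph obtained from the single edge e by the m - j refinement steps.
  Its height is 2^(m-j).\<close>
definition subdiamond :: "nat \<Rightarrow> nat \<Rightarrow> dvert \<times> dvert \<Rightarrow> dvert set" where
  "subdiamond m j e = endpoints ((refine ^^ (m - j)) {e})"

end

theory Submission
  imports Defs
begin

lemma refine_UN: "refine (\<Union>i\<in>I. B i) = (\<Union>i\<in>I. refine (B i))"
  unfolding refine_def by blast

lemma refine_single: "refine {(u,v)} = {(u, Mid u v False), (Mid u v False, v), (u, Mid u v True), (Mid u v True, v)}"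
proof -
  have "(\<Union>s. {(u, Mid u v s), (Mid u v s, v)}) = {(u, Mid u v False), (Mid u v False, v)} \<union> {(u, Mid u v True), (Mid u v True, v)}"
    by (simp only: UNIV_bool) auto
  then show ?thesis unfolding refine_def by auto
qed

lemma funpow_distrib: "(refine ^^ k) X = (\<Union>f\<in>X. (refine ^^ k) {f})"
proof (induction k)
  case 0 then show ?case by auto
next
  case (Suc k)
  have "(refine ^^ Suc k) X = refine ((refine ^^ k) X)" by simp
  also have "\<dots> = refine (\<Union>f\<in>X. (refine ^^ k) {f})" using Suc by simp
  also have "\<dots> = (\<Union>f\<in>X. (refine ^^ Suc k) {f})" by (simp add: refine_UN)
  finally show ?case .
qed

lemma funpow_mono: "X \<subseteq> Y \<Longrightarrow> (refine ^^ k) X \<subseteq> (refine ^^ k) Y"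
  by (subst (1 2) funpow_distrib) blast

lemma refine_Suc_single: "(refine ^^ Suc k) {(u,v)} =
   (refine ^^ k) {(u, Mid u v False)} \<union> (refine ^^ k) {(Mid u v False, v)} \<union>
   (refine ^^ k) {(u, Mid u v True)} \<union> (refine ^^ k) {(Mid u v True, v)}"
proof -
  have "(refine ^^ Suc k) {(u,v)} = (refine ^^ k) (refine {(u,v)})"
    by (simp add: funpow_Suc_right del: funpow.simps)
  also have "\<dots> = (\<Union>f\<in>refine {(u,v)}. (refine ^^ k) {f})" by (rule funpow_distrib)
  finally show ?thesis by (simp add: refine_single) blast
qed

lemma quarters: "(refine ^^ Suc k) {(u,v)} \<subseteq> D \<Longrightarrow>
   (refine ^^ k) {(u, Mid u v s)} \<subseteq> D \<and> (refine ^^ k) {(Mid u v s, v)} \<subseteq> D"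
  using refine_Suc_single[of k u v] by (cases s) auto

lemma endpoints_Un: "endpoints (X \<union> Y) = endpoints X \<union> endpoints Y"
  unfolding endpoints_def by blast

lemma endpoints_UN: "endpoints (\<Union>i\<in>I. B i) = (\<Union>i\<in>I. endpoints (B i))"
  unfolding endpoints_def by blast

lemma sub_dedges: "e \<in> dedges j \<Longrightarrow> (refine ^^ k) {e} \<subseteq> dedges (k + j)"
proof -
  assume "e \<in> dedges j"
  then have "(refine ^^ k) {e} \<subseteq> (refine ^^ k) (dedges j)" by (intro funpow_mono) auto
  also have "\<dots> = dedges (k + j)" unfolding dedges_def by (simp add: funpow_add)
  finally show ?thesis .
qed

lemma dadj_sym: "(x,y) \<in> dadj m ^^ n \<Longrightarrow> (y,x) \<in> dadj m ^^ n"
proof (induction n arbitrary: x y)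
  case 0 then show ?case by simp
next
  case (Suc n)
  then obtain z where "(x,z) \<in> dadj m ^^ n" "(z,y) \<in> dadj m" by auto
  then have "(z,x) \<in> dadj m ^^ n" "(y,z) \<in> dadj m" using Suc by (auto simp: dadj_def)
  then show ?case by (meson relpow_Suc_I2)
qed

lemma walk_add: "(x,y) \<in> R ^^ a \<Longrightarrow> (y,z) \<in> R ^^ b \<Longrightarrow> (x,z) \<in> R ^^ (a + b)"
  by (auto simp: relpow_add)

lemma walk_top: "(refine ^^ k) {(u,v)} \<subseteq> dedges m \<Longrightarrow> (u,v) \<in> dadj m ^^ (2^k)"
proof (induction k arbitrary: u v)
  case 0 then show ?case by (auto simp: dadj_def)
next
  case (Suc k)
  let ?a = "Mid u v False"
  have "(u,?a) \<in> dadj m ^^ (2^k)" "(?a,v) \<in> dadj m ^^ (2^k)"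
    using Suc.IH quarters[OF Suc.prems, of False] by auto
  then have "(u,v) \<in> dadj m ^^ (2^k + 2^k)" by (rule walk_add)
  then show ?case by (simp add: mult_2)
qed

lemma level: "(refine ^^ k) {(u,v)} \<subseteq> dedges m \<Longrightarrow> x \<in> endpoints ((refine ^^ k) {(u,v)}) \<Longrightarrow>
  \<exists>a\<le>2^k. (u,x) \<in> dadj m ^^ a \<and> (x,v) \<in> dadj m ^^ (2^k - a)"
proof (induction k arbitrary: u v)
  case 0
  then have uv: "(u,v) \<in> dadj m" by (auto simp: dadj_def)
  from 0 have "x = u \<or> x = v" by (auto simp: endpoints_def)
  then show ?case
  proof
    assume "x = u" then show ?thesis using uv by (intro exI[of _ 0]) auto
  next
    assume "x = v" then show ?thesis using uv by (intro exI[of _ 1]) auto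
  qed
next
  case (Suc k)
  have key: "\<exists>a\<le>2^Suc k. (u,x) \<in> dadj m ^^ a \<and> (x,v) \<in> dadj m ^^ (2^Suc k - a)"
    if w: "w = Mid u v s" and xin: "x \<in> endpoints ((refine ^^ k) {(u,w)}) \<or> x \<in> endpoints ((refine ^^ k) {(w,v)})" for w s
  proof -
    have s1: "(refine ^^ k) {(u,w)} \<subseteq> dedges m" and s2: "(refine ^^ k) {(w,v)} \<subseteq> dedges m"
      using quarters[OF Suc.prems(1), of s] w by auto
    have uw: "(u,w) \<in> dadj m ^^ (2^k)" and wv: "(w,v) \<in> dadj m ^^ (2^k)"
      using walk_top s1 s2 by auto
    from xin show ?thesis
    proof
      assume "x \<in> endpoints ((refine ^^ k) {(u,w)})"
      then obtain a where a: "a \<le> 2^k" "(u,x) \<in> dadj m ^^ a" "(x,w) \<in> dadj m ^^ (2^k - a)"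
        using Suc.IH s1 by blast
      have "(x,v) \<in> dadj m ^^ (2^k - a + 2^k)" using walk_add[OF a(3) wv] .
      moreover have "2^k - a + 2^k = 2^Suc k - a" using a(1) by simp
      ultimately show ?thesis using a by (intro exI[of _ a]) auto
    next
      assume "x \<in> endpoints ((refine ^^ k) {(w,v)})"
      then obtain a where a: "a \<le> 2^k" "(w,x) \<in> dadj m ^^ a" "(x,v) \<in> dadj m ^^ (2^k - a)"
        using Suc.IH s2 by blast
      have "(u,x) \<in> dadj m ^^ (2^k + a)" using walk_add[OF uw a(2)] .
      moreover have "2^k - a = 2^Suc k - (2^k + a)" using a(1) by simp
      ultimately show ?thesis using a by (intro exI[of _ "2^k + a"]) auto
    qed
  qed
  from Suc.prems(2) show ?case
    unfolding refine_Suc_single endpoints_Un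
    using key[of "Mid u v False" False] key[of "Mid u v True" True] by blast
qed

lemma quarter: "(refine ^^ Suc k) {(u,v)} \<subseteq> dedges m \<Longrightarrow> x \<in> endpoints ((refine ^^ Suc k) {(u,v)}) \<Longrightarrow>
  \<exists>L\<le>2^Suc k. (u,x) \<in> dadj m ^^ L \<and> (x,v) \<in> dadj m ^^ (2^Suc k - L)
     \<and> (L = 2^k \<longrightarrow> x = Mid u v False \<or> x = Mid u v True)"
proof -
  assume prem1: "(refine ^^ Suc k) {(u,v)} \<subseteq> dedges m"
    and prem2: "x \<in> endpoints ((refine ^^ Suc k) {(u,v)})"
  have key: "\<exists>L\<le>2^Suc k. (u,x) \<in> dadj m ^^ L \<and> (x,v) \<in> dadj m ^^ (2^Suc k - L)
     \<and> (L = 2^k \<longrightarrow> x = Mid u v False \<or> x = Mid u v True)"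
    if w: "w = Mid u v s" and xin: "x \<in> endpoints ((refine ^^ k) {(u,w)}) \<or> x \<in> endpoints ((refine ^^ k) {(w,v)})" for w s
  proof -
    have s1: "(refine ^^ k) {(u,w)} \<subseteq> dedges m" and s2: "(refine ^^ k) {(w,v)} \<subseteq> dedges m"
      using quarters[OF prem1, of s] w by auto
    have uw: "(u,w) \<in> dadj m ^^ (2^k)" and wv: "(w,v) \<in> dadj m ^^ (2^k)"
      using walk_top s1 s2 by auto
    have wmid: "w = Mid u v False \<or> w = Mid u v True" using w by (cases s) auto
    from xin show ?thesis
    proof
      assume "x \<in> endpoints ((refine ^^ k) {(u,w)})"
      then obtain a where a: "a \<le> 2^k" "(u,x) \<in> dadj m ^^ a" "(x,w) \<in> dadj m ^^ (2^k - a)"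
        using level s1 by blast
      have "(x,v) \<in> dadj m ^^ (2^k - a + 2^k)" using walk_add[OF a(3) wv] .
      moreover have "2^k - a + 2^k = 2^Suc k - a" using a(1) by simp
      moreover have "a = 2^k \<longrightarrow> x = w" using a(3) by auto
      ultimately show ?thesis using a wmid by (intro exI[of _ a]) auto
    next
      assume "x \<in> endpoints ((refine ^^ k) {(w,v)})"
      then obtain a where a: "a \<le> 2^k" "(w,x) \<in> dadj m ^^ a" "(x,v) \<in> dadj m ^^ (2^k - a)"
        using level s2 by blast
      have "(u,x) \<in> dadj m ^^ (2^k + a)" using walk_add[OF uw a(2)] .
      moreover have "2^k - a = 2^Suc k - (2^k + a)" using a(1) by simp
      moreover have "2^k + a = 2^k \<longrightarrow> x = w" using a(2) by auto
      ultimately show ?thesis using a wmid by (intro exI[of _ "2^k + a"]) auto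
    qed
  qed
  from prem2 show ?thesis
    unfolding refine_Suc_single endpoints_Un
    using key[of "Mid u v False" False] key[of "Mid u v True" True] by blast
qed

lemma ddist_le: "(x,y) \<in> dadj m ^^ n \<Longrightarrow> ddist m x y \<le> n"
  unfolding ddist_def by (rule Least_le)

lemma pair_bound:
  assumes "L1 \<le> H" "L2 \<le> H"
    and "(u,x) \<in> dadj m ^^ L1" "(x,v) \<in> dadj m ^^ (H - L1)"
    and "(u,y) \<in> dadj m ^^ L2" "(y,v) \<in> dadj m ^^ (H - L2)"
    and "ddist m x y \<ge> H"
  shows "L1 + L2 = H"
proof -
  have "(x,y) \<in> dadj m ^^ (L1 + L2)" using walk_add[OF dadj_sym[OF assms(3)] assms(5)] .
  then have 1: "ddist m x y \<le> L1 + L2" by (rule ddist_le)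
  have "(x,y) \<in> dadj m ^^ ((H - L1) + (H - L2))" using walk_add[OF assms(4) dadj_sym[OF assms(6)]] .
  then have 2: "ddist m x y \<le> (H - L1) + (H - L2)" by (rule ddist_le)
  show ?thesis using 1 2 assms(1,2,7) by linarith
qed

lemma three_points:
  assumes sub: "(refine ^^ Suc k) {(u,v)} \<subseteq> dedges m"
    and B: "B \<subseteq> endpoints ((refine ^^ Suc k) {(u,v)})"
    and far: "\<forall>x\<in>B. \<forall>y\<in>B. x \<noteq> y \<longrightarrow> ddist m x y \<ge> 2 ^ Suc k"
  shows "card B \<le> 2"
proof (rule ccontr)
  assume "\<not> card B \<le> 2"
  then have "Suc (Suc (Suc 0)) \<le> card B" by simp
  then obtain x y z where xyz: "x \<in> B" "y \<in> B" "z \<in> B" "x \<noteq> y" "x \<noteq> z" "y \<noteq> z"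
    by (auto simp: card_le_Suc_iff)
  let ?H = "2 ^ Suc k :: nat"
  obtain L1 where l1: "L1 \<le> ?H" "(u,x) \<in> dadj m ^^ L1" "(x,v) \<in> dadj m ^^ (?H - L1)"
     "L1 = 2^k \<longrightarrow> x = Mid u v False \<or> x = Mid u v True"
    using quarter[OF sub] B xyz(1) by blast
  obtain L2 where l2: "L2 \<le> ?H" "(u,y) \<in> dadj m ^^ L2" "(y,v) \<in> dadj m ^^ (?H - L2)"
     "L2 = 2^k \<longrightarrow> y = Mid u v False \<or> y = Mid u v True"
    using quarter[OF sub] B xyz(2) by blast
  obtain L3 where l3: "L3 \<le> ?H" "(u,z) \<in> dadj m ^^ L3" "(z,v) \<in> dadj m ^^ (?H - L3)"
     "L3 = 2^k \<longrightarrow> z = Mid u v False \<or> z = Mid u v True"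
    using quarter[OF sub] B xyz(3) by blast
  have "L1 + L2 = ?H" using pair_bound[OF l1(1) l2(1) l1(2,3) l2(2,3)] far xyz by auto
  moreover have "L1 + L3 = ?H" using pair_bound[OF l1(1) l3(1) l1(2,3) l3(2,3)] far xyz by auto
  moreover have "L2 + L3 = ?H" using pair_bound[OF l2(1) l3(1) l2(2,3) l3(2,3)] far xyz by auto
  ultimately have "L1 = 2^k" "L2 = 2^k" "L3 = 2^k" by auto
  then show False using l1(4) l2(4) l3(4) xyz by auto
qed

lemma card_refine: "finite E \<Longrightarrow> finite (refine E) \<and> card (refine E) \<le> 4 * card E"
proof -
  assume fin: "finite E"
  have eq: "refine E = (\<Union>f\<in>E. refine {f})" using refine_UN[of "\<lambda>f. {f}" E] by simp
  have c: "card (refine {f}) \<le> 4" for f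
    by (cases f) (simp add: refine_single card_insert_if)
  have "finite (refine {f})" for f by (cases f) (simp add: refine_single)
  then have "finite (refine E)" using fin eq by simp
  moreover have "card (refine E) \<le> (\<Sum>f\<in>E. card (refine {f}))" unfolding eq by (rule card_UN_le[OF fin])
  moreover have "(\<Sum>f\<in>E. card (refine {f})) \<le> (\<Sum>f\<in>E. 4)" by (rule sum_mono) (rule c)
  ultimately show ?thesis by simp
qed

lemma card_funpow: "finite ((refine ^^ k) {e}) \<and> card ((refine ^^ k) {e}) \<le> 4 ^ k"
proof (induction k)
  case 0 then show ?case by simp
next
  case (Suc k)
  then show ?case using card_refine[of "(refine ^^ k) {e}"] by auto
qed

lemma card_endpoints1: "card (endpoints {f}) \<le> 2"
  by (cases f) (simp add: endpoints_def card_insert_if)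

theorem lemmaL:
  fixes m p h j :: nat and e :: "dvert \<times> dvert" and M A :: "dvert set"
  assumes "p \<le> h"
    and "j \<le> m" and "e \<in> dedges j" and "M = subdiamond m j e"
    and "(2::nat) ^ (m - j) = 2 ^ h"
    and "A \<subseteq> M"
    and "\<forall>u\<in>A. \<forall>v\<in>A. u \<noteq> v \<longrightarrow> ddist m u v \<ge> 2 ^ p"
  shows "card A \<le> 2 * 4 ^ (h - p)"
proof -
  have hm: "m - j = h" using assms(5) by (simp add: power_inject_exp)
  define F where "F = (refine ^^ (h - p)) {e}"
  have Fsub: "F \<subseteq> dedges (h - p + j)" unfolding F_def by (rule sub_dedges[OF assms(3)])
  have finF: "finite F" and cardF: "card F \<le> 4 ^ (h - p)" using card_funpow F_def by auto
  define P where "P f = endpoints ((refine ^^ p) {f})" for f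
  have "(refine ^^ h) {e} = (refine ^^ p) F"
  proof -
    have "h = p + (h - p)" using assms(1) by simp
    then have "(refine ^^ h) = (refine ^^ p) \<circ> (refine ^^ (h - p))" by (metis funpow_add)
    then show ?thesis unfolding F_def by simp
  qed
  also have "\<dots> = (\<Union>f\<in>F. (refine ^^ p) {f})" by (rule funpow_distrib)
  finally have "M = (\<Union>f\<in>F. P f)" using assms(4) hm
    unfolding subdiamond_def P_def by (simp add: endpoints_UN)
  then have Aeq: "A = (\<Union>f\<in>F. A \<inter> P f)" using assms(6) by blast
  have piece: "card (A \<inter> P f) \<le> 2" if f: "f \<in> F" for f
  proof (cases p)
    case 0
    have "finite (endpoints {f})" by (cases f) (simp add: endpoints_def)
    then have "card (A \<inter> P f) \<le> card (endpoints {f})" unfolding P_def 0 by (simp add: card_mono)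
    then show ?thesis using card_endpoints1[of f] by simp
  next
    case (Suc k)
    obtain u v where uv: "f = (u,v)" by (cases f)
    have "(refine ^^ p) {f} \<subseteq> dedges (p + (h - p + j))"
      using sub_dedges Fsub f by blast
    moreover have "p + (h - p + j) = m" using assms(1,2) hm by simp
    ultimately have "(refine ^^ Suc k) {(u,v)} \<subseteq> dedges m" using Suc uv by simp
    from three_points[OF this, of "A \<inter> P f"] show ?thesis
      using assms(7) Suc uv unfolding P_def by auto
  qed
  have "card A \<le> (\<Sum>f\<in>F. card (A \<inter> P f))" by (subst Aeq) (rule card_UN_le[OF finF])
  also have "\<dots> \<le> (\<Sum>f\<in>F. 2)" by (rule sum_mono) (rule piece)
  also have "\<dots> = 2 * card F" by simp
  also have "\<dots> \<le> 2 * 4 ^ (h - p)" using cardF by simp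
  finally show ?thesis .
qed

end
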